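(* Let $n\geq 2$ be an integer and let $D\subset\{0,1,\ldots,n^2\}$ satisfy $|d-d'|\neq 1$ for all $d,d'\in D$. Let $k\ge1$ and let $(d_1,\ldots,d_k),(d_1',\ldots,d_k')\in D^k$ with $d_j\neq d_j'$ for some $1\le j\le k$. Then the $k$-tiles $T_{d_1,\ldots,d_k}$ and $T_{d_1',\ldots,d_k'}$ of $T_n$ are disjoint.
   Context: Let $b:=-n+i$. $T_n$ is the attractor of $\{z\mapsto b^{-1}(z+d): d\in\{0,1,\ldots,n^2\}\}$, i.e. $T_n=\{\sum_{j\ge1}d_jb^{-j}: d_j\in\{0,\ldots,n^2\}\}$. For $d_1,\ldots,d_k\in\{0,\ldots,n^2\}$, the $k$-tile $T_{d_1,\ldots,d_k}$ is $\{\sum_{j=1}^k d_jb^{-j}+b^{-k}t: t\in T_n\}$. *)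

theory Defs
  imports "HOL-Analysis.Analysis"
begin

definition base :: "nat \<Rightarrow> complex" where
  "base n = - of_nat n + \<i>"

text \<open>T_n = { sum_{j>=1} d_j b^{-j} : d_j in {0..n^2} }; here the digit sequence is
  indexed from 0, with d 0 playing the role of d_1.\<close>
definition Tn :: "nat \<Rightarrow> complex set" where
  "Tn n = {(\<Sum>j. of_nat (d j) / base n ^ (Suc j)) | d. \<forall>j. d j \<in> {0..n^2}}"

definition tile :: "nat \<Rightarrow> nat list \<Rightarrow> complex set" where
  "tile n ds = {(\<Sum>j<length ds. of_nat (ds ! j) / base n ^ (Suc j)) + t / base n ^ length ds
                 | t. t \<in> Tn n}"

end

theory Submission
  imports Defs
begin

definition ser :: "nat \<Rightarrow> (nat \<Rightarrow> int) \<Rightarrow> complex" where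
  "ser n G = (\<Sum>j. of_int (G j) / base n ^ Suc j)"

lemma base_Re: "Re (base n) = - real n" and base_Im: "Im (base n) = 1"
  by (simp_all add: base_def)

lemma base_norm: "cmod (base n) \<ge> real n"
  using abs_Re_le_cmod[of "base n"] by (simp add: base_Re)

lemma base_nz: "base n \<noteq> 0"
  using base_Im[of n] by auto

lemma term_bound:
  assumes n: "n \<ge> 2" and G: "\<bar>G j\<bar> \<le> int n ^ 2"
  shows "norm (of_int (G j) / base n ^ Suc j) \<le> real n ^ 2 * (1 / real n) ^ Suc j"
proof -
  have "norm (of_int (G j) / base n ^ Suc j) = real_of_int \<bar>G j\<bar> / cmod (base n) ^ Suc j"
    by (simp only: norm_divide norm_power norm_of_int)
  also have "\<dots> \<le> real n ^ 2 / real n ^ Suc j"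
  proof (rule frac_le)
    show "real_of_int \<bar>G j\<bar> \<le> real n ^ 2" using G
      by (metis of_int_le_iff of_int_of_nat_eq of_int_power)
    show "0 < real n ^ Suc j" using n by simp
    show "real n ^ Suc j \<le> cmod (base n) ^ Suc j"
      by (rule power_mono[OF base_norm]) simp
  qed simp
  also have "\<dots> = real n ^ 2 * (1 / real n) ^ Suc j"
    by (simp add: power_one_over divide_inverse power_inverse)
  finally show ?thesis .
qed

lemma ser_summable:
  assumes n: "n \<ge> 2" and G: "\<forall>j. \<bar>G j\<bar> \<le> int n ^ 2"
  shows "summable (\<lambda>j. of_int (G j) / base n ^ Suc j)"
proof (rule summable_comparison_test)
  show "\<exists>N. \<forall>j\<ge>N. norm (of_int (G j) / base n ^ Suc j) \<le> real n ^ 2 * (1 / real n) ^ Suc j"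
    using term_bound[OF n] G by blast
  have "summable (\<lambda>j. (1 / real n) ^ j)" using n by (intro summable_geometric) simp
  then have "summable (\<lambda>j. (1 / real n) ^ Suc j)" by (subst summable_Suc_iff)
  then show "summable (\<lambda>j. real n ^ 2 * (1 / real n) ^ Suc j)" by (rule summable_mult)
qed

lemma ser_shift:
  assumes n: "n \<ge> 2" and G: "\<forall>j. \<bar>G j\<bar> \<le> int n ^ 2"
  shows "ser n (\<lambda>j. G (Suc j)) = base n * ser n G - of_int (G 0)"
proof -
  let ?f = "\<lambda>j. of_int (G j) / base n ^ Suc j"
  have s: "summable ?f" by (rule ser_summable[OF n G])
  have "(\<Sum>j. ?f (Suc j)) = ser n G - ?f 0"
    using suminf_split_head[OF s] by (simp add: ser_def)
  moreover have "(\<lambda>j. ?f (Suc j)) = (\<lambda>j. (of_int (G (Suc j)) / base n ^ Suc j) / base n)"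
    by (simp add: field_simps)
  moreover have "summable (\<lambda>j. of_int (G (Suc j)) / base n ^ Suc j)"
    using ser_summable[OF n, of "\<lambda>j. G (Suc j)"] G by simp
  then have "(\<Sum>j. (of_int (G (Suc j)) / base n ^ Suc j) / base n) = ser n (\<lambda>j. G (Suc j)) / base n"
    unfolding ser_def by (rule suminf_divide)
  ultimately have "ser n (\<lambda>j. G (Suc j)) / base n = ser n G - of_int (G 0) / base n"
    by simp
  then show ?thesis using base_nz[of n] by (simp add: field_simps)
qed

lemma Im_f0: "Im (of_int g / base n ^ Suc 0) = - of_int g / (real n ^ 2 + 1)"
  by (simp add: Im_divide base_Re base_Im)

lemma Im_f1: "Im (of_int g / base n ^ Suc (Suc 0)) = of_int g * (2 * real n) / (real n ^ 2 + 1) ^ 2"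
proof -
  have r: "Re (base n ^ 2) = real n ^ 2 - 1" and i: "Im (base n ^ 2) = - 2 * real n"
    by (simp_all add: Re_power2 Im_power2 base_Re base_Im)
  have "(real n ^ 2 - 1)\<^sup>2 + (- 2 * real n)\<^sup>2 = (real n ^ 2 + 1) ^ 2"
    by (simp add: power2_eq_square algebra_simps)
  then show ?thesis
    using r i by (simp add: Im_divide numeral_2_eq_2[symmetric])
qed

lemma Im_bound:
  assumes n: "n \<ge> 2" and G: "\<forall>j. \<bar>G j\<bar> \<le> int n ^ 2"
  shows "\<bar>Im (ser n G)\<bar> \<le> real n ^ 2 / (real n ^ 2 + 1) + 2 * real n ^ 3 / (real n ^ 2 + 1) ^ 2 + 1 / (real n - 1)"
proof -
  let ?f = "\<lambda>j. of_int (G j) / base n ^ Suc j"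
  have s: "?f sums ser n G" unfolding ser_def by (rule summable_sums[OF ser_summable[OF n G]])
  have "(\<lambda>i. ?f (i + 2)) sums (ser n G - sum ?f {..<2})"
    by (rule sums_split_initial_segment[OF s])
  then have ts: "(\<lambda>i. ?f (i + 2)) sums (ser n G - ?f 0 - ?f 1)"
    by (simp add: numeral_2_eq_2 diff_diff_eq)
  define T where "T = ser n G - ?f 0 - ?f 1"
  have q: "norm (1 / real n) < 1" using n by simp
  have gs: "(\<lambda>i. (1 / real n) * (1 / real n) ^ i) sums ((1 / real n) * (1 / (1 - 1 / real n)))"
    by (rule sums_mult[OF geometric_sums[OF q]])
  have "(1 / real n) * (1 / (1 - 1 / real n)) = 1 / (real n - 1)"
    using n by (simp add: field_simps)
  with gs have gs': "(\<lambda>i. (1 / real n) * (1 / real n) ^ i) sums (1 / (real n - 1))" by simp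
  have "norm T \<le> 1 / (real n - 1)"
  proof -
    have "norm T = norm (\<Sum>i. ?f (i + 2))" using ts unfolding T_def by (simp add: sums_iff)
    also have "\<dots> \<le> (\<Sum>i. (1 / real n) * (1 / real n) ^ i)"
    proof (rule norm_suminf_le)
      fix i
      have "norm (?f (i + 2)) \<le> real n ^ 2 * (1 / real n) ^ Suc (i + 2)"
        using term_bound[OF n] G by blast
      also have "\<dots> = (1 / real n) * (1 / real n) ^ i"
        using n by (simp add: power_add power_one_over field_simps power2_eq_square)
      finally show "norm (?f (i + 2)) \<le> (1 / real n) * (1 / real n) ^ i" .
    qed (use gs' in \<open>simp add: sums_iff\<close>)
    also have "\<dots> = 1 / (real n - 1)" using gs' by (simp add: sums_iff)
    finally show ?thesis .
  qed
  then have tT: "\<bar>Im T\<bar> \<le> 1 / (real n - 1)" using abs_Im_le_cmod[of T] by linarith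
  have e: "ser n G = ?f 0 + ?f 1 + T" unfolding T_def by simp
  have i0: "\<bar>Im (?f 0)\<bar> \<le> real n ^ 2 / (real n ^ 2 + 1)"
  proof -
    have "\<bar>Im (?f 0)\<bar> = \<bar>of_int (G 0)\<bar> / (real n ^ 2 + 1)"
      using Im_f0[of "G 0" n] by (simp add: abs_divide)
    also have "\<dots> \<le> real n ^ 2 / (real n ^ 2 + 1)"
      using G by (intro divide_right_mono) (simp_all, metis of_int_le_iff of_int_of_nat_eq of_int_power of_int_abs)
    finally show ?thesis .
  qed
  have i1: "\<bar>Im (?f 1)\<bar> \<le> 2 * real n ^ 3 / (real n ^ 2 + 1) ^ 2"
  proof -
    have "\<bar>Im (?f 1)\<bar> = \<bar>of_int (G 1)\<bar> * (2 * real n) / (real n ^ 2 + 1) ^ 2"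
      using Im_f1[of "G 1" n] by (simp add: abs_divide abs_mult)
    also have "\<dots> \<le> real n ^ 2 * (2 * real n) / (real n ^ 2 + 1) ^ 2"
    proof (intro divide_right_mono mult_right_mono)
      show "\<bar>real_of_int (G 1)\<bar> \<le> real n ^ 2"
        using G by (metis of_int_le_iff of_int_of_nat_eq of_int_power of_int_abs)
    qed simp_all
    also have "\<dots> = 2 * real n ^ 3 / (real n ^ 2 + 1) ^ 2"
      by (simp add: power3_eq_cube power2_eq_square)
    finally show ?thesis .
  qed
  have "\<bar>Im (ser n G)\<bar> \<le> \<bar>Im (?f 0)\<bar> + \<bar>Im (?f 1)\<bar> + \<bar>Im T\<bar>"
    unfolding e by simp
  then show ?thesis using i0 i1 tT by linarith
qed

definition Bd :: "nat \<Rightarrow> real" where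
  "Bd n = real n ^ 2 / (real n ^ 2 + 1) + 2 * real n ^ 3 / (real n ^ 2 + 1) ^ 2 + 1 / (real n - 1)"

lemma Bd2: "Bd 2 < 3" by (simp add: Bd_def)

lemma Bd_ge3: assumes "n \<ge> 3" shows "Bd n < 2"
proof (cases "n = 3")
  case True then show ?thesis by (simp add: Bd_def)
next
  case False
  then have n4: "real n \<ge> 4" using assms by simp
  have p: "0 < real n ^ 2 + 1" using zero_le_power2[of "real n"] by linarith
  then have a: "real n ^ 2 / (real n ^ 2 + 1) < 1" by (simp add: divide_less_eq)
  have "2 * real n ^ 3 / (real n ^ 2 + 1) ^ 2 \<le> 2 * real n ^ 3 / (real n ^ 2) ^ 2"
  proof (rule divide_left_mono)
    show "(real n ^ 2) ^ 2 \<le> (real n ^ 2 + 1) ^ 2" by (rule power_mono) simp_all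
    show "0 < (real n ^ 2 + 1) ^ 2 * (real n ^ 2) ^ 2" using p n4 by simp
  qed simp
  also have "\<dots> = 2 / real n" using n4 by (simp add: power2_eq_square power3_eq_cube field_simps)
  also have "\<dots> \<le> 1 / 2" using n4 by (simp add: field_simps)
  finally have b: "2 * real n ^ 3 / (real n ^ 2 + 1) ^ 2 \<le> 1 / 2" .
  have c: "1 / (real n - 1) \<le> 1 / 3" using n4 by (simp add: field_simps)
  show ?thesis using a b c unfolding Bd_def by linarith
qed

lemma key:
  assumes n: "n \<ge> 2" and G: "\<forall>j. \<bar>G j\<bar> \<le> int n ^ 2"
    and z: "ser n G = 0" and g0: "\<bar>G 0\<bar> \<ge> 2"
  shows False
proof -
  have G1: "\<forall>j. \<bar>G (Suc j)\<bar> \<le> int n ^ 2" and G2: "\<forall>j. \<bar>G (Suc (Suc j))\<bar> \<le> int n ^ 2"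
    and G3: "\<forall>j. \<bar>G (Suc (Suc (Suc j)))\<bar> \<le> int n ^ 2" using G by auto
  have S1: "ser n (\<lambda>j. G (Suc j)) = - of_int (G 0)"
    using ser_shift[OF n G] z by simp
  have S2: "ser n (\<lambda>j. G (Suc (Suc j))) = base n * (- of_int (G 0)) - of_int (G 1)"
    using ser_shift[OF n G1] S1 by simp
  have S3: "ser n (\<lambda>j. G (Suc (Suc (Suc j)))) = base n * (base n * (- of_int (G 0)) - of_int (G 1)) - of_int (G 2)"
    using ser_shift[OF n G2] S2 by (simp add: numeral_2_eq_2)
  have "Im (ser n (\<lambda>j. G (Suc (Suc j)))) = - of_int (G 0)"
    unfolding S2 by (simp add: base_Re base_Im)
  with Im_bound[OF n G2] have b1: "\<bar>of_int (G 0)\<bar> \<le> Bd n" unfolding Bd_def by simp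
  show False
  proof (cases "n \<ge> 3")
    case True
    have "real_of_int \<bar>G 0\<bar> \<ge> 2" using g0 by linarith
    with Bd_ge3[OF True] b1 show False by simp
  next
    case False
    with n have n2: "n = 2" by simp
    have b2: "\<bar>of_int (G 0)\<bar> < (3::real)" using b1 Bd2 n2 by simp
    then have "\<bar>G 0\<bar> = 2" using g0 by linarith
    have "Im (ser n (\<lambda>j. G (Suc (Suc (Suc j))))) = 4 * of_int (G 0) - of_int (G 1)"
      unfolding S3 by (simp add: base_Re base_Im n2 algebra_simps)
    with Im_bound[OF n G3] have b3: "\<bar>4 * of_int (G 0) - of_int (G 1)\<bar> \<le> Bd 2"
      unfolding Bd_def n2 by simp
    have "\<bar>G 1\<bar> \<le> 4" using spec[OF G, of 1] n2 by simp
    then have "\<bar>4 * G 0 - G 1\<bar> \<ge> 4" using \<open>\<bar>G 0\<bar> = 2\<close> by linarith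
    then have "\<bar>4 * real_of_int (G 0) - of_int (G 1)\<bar> \<ge> 4"
      by (metis of_int_abs of_int_diff of_int_le_iff of_int_mult of_int_numeral)
    with b3 Bd2 show False by linarith
  qed
qed

lemma ser_shiftn:
  assumes n: "n \<ge> 2" and G: "\<forall>j. \<bar>G j\<bar> \<le> int n ^ 2"
    and z: "ser n G = 0" and zi: "\<forall>j<i. G j = 0"
  shows "ser n (\<lambda>j. G (j + i)) = 0"
  using zi
proof (induction i)
  case 0 then show ?case using z by simp
next
  case (Suc i)
  have H: "\<forall>j. \<bar>G (j + i)\<bar> \<le> int n ^ 2" using G by simp
  have "ser n (\<lambda>j. G (j + Suc i)) = ser n (\<lambda>j. G (Suc j + i))" by simp
  also have "\<dots> = base n * ser n (\<lambda>j. G (j + i)) - of_int (G (0 + i))"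
    by (rule ser_shift[OF n H])
  also have "\<dots> = 0" using Suc by simp
  finally show ?case .
qed

lemma concat:
  assumes n: "n \<ge> 2" and d: "\<forall>j. d j \<le> n ^ 2" and ds: "\<forall>j<length ds. ds ! j \<le> n ^ 2"
  shows "(\<Sum>j<length ds. of_nat (ds ! j) / base n ^ Suc j) + (\<Sum>j. of_nat (d j) / base n ^ Suc j) / base n ^ length ds
     = ser n (\<lambda>j. int (if j < length ds then ds ! j else d (j - length ds)))"
proof -
  let ?k = "length ds"
  let ?D = "\<lambda>j. int (if j < ?k then ds ! j else d (j - ?k))"
  let ?f = "\<lambda>j. of_int (?D j) / base n ^ Suc j"
  have dsum: "summable (\<lambda>j. of_nat (d j) / base n ^ Suc j)"
    using ser_summable[OF n, of "\<lambda>j. int (d j)"] d by simp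
  define t where "t = (\<Sum>j. of_nat (d j) / base n ^ Suc j)"
  have "(\<lambda>j. of_nat (d j) / base n ^ Suc j) sums t" unfolding t_def using dsum by (rule summable_sums)
  then have "(\<lambda>j. of_nat (d j) / base n ^ Suc j / base n ^ ?k) sums (t / base n ^ ?k)"
    by (rule sums_divide)
  moreover have "(\<lambda>j. ?f (j + ?k)) = (\<lambda>j. of_nat (d j) / base n ^ Suc j / base n ^ ?k)"
    by (rule ext) (simp add: power_add field_simps)
  ultimately have "(\<lambda>j. ?f (j + ?k)) sums (t / base n ^ ?k)" by simp
  then have "?f sums (t / base n ^ ?k + sum ?f {..<?k})" using sums_iff_shift[of ?f ?k "t / base n ^ ?k"] by blast
  moreover have "sum ?f {..<?k} = (\<Sum>j<?k. of_nat (ds ! j) / base n ^ Suc j)"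
    by (rule sum.cong) auto
  ultimately have "?f sums ((\<Sum>j<?k. of_nat (ds ! j) / base n ^ Suc j) + t / base n ^ ?k)"
    by (simp add: add.commute)
  then show ?thesis unfolding ser_def t_def by (simp add: sums_iff)
qed

theorem lemma4p4:
  fixes n k :: nat and D :: "nat set" and ds ds' :: "nat list"
  assumes "n \<ge> 2"
    and "D \<subseteq> {0..n^2}"
    and "\<forall>d\<in>D. \<forall>d'\<in>D. \<bar>int d - int d'\<bar> \<noteq> 1"
    and "k \<ge> 1"
    and "length ds = k" and "length ds' = k"
    and "set ds \<subseteq> D" and "set ds' \<subseteq> D"
    and "\<exists>j<k. ds ! j \<noteq> ds' ! j"
  shows "tile n ds \<inter> tile n ds' = {}"
proof (rule ccontr)
  assume "tile n ds \<inter> tile n ds' \<noteq> {}"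
  then obtain x where x1: "x \<in> tile n ds" and x2: "x \<in> tile n ds'" by blast
  have n: "n \<ge> 2" using assms(1) .
  have dsb: "\<forall>j<length ds. ds ! j \<le> n ^ 2" using assms(2,7) nth_mem by fastforce
  have dsb': "\<forall>j<length ds'. ds' ! j \<le> n ^ 2" using assms(2,8) nth_mem by fastforce
  from x1 obtain t d where xt: "x = (\<Sum>j<k. of_nat (ds ! j) / base n ^ (Suc j)) + t / base n ^ k"
    and t: "t = (\<Sum>j. of_nat (d j) / base n ^ (Suc j))" and d: "\<forall>j. d j \<in> {0..n^2}"
    unfolding tile_def Tn_def using assms(5) by blast
  from x2 obtain t' d' where xt': "x = (\<Sum>j<k. of_nat (ds' ! j) / base n ^ (Suc j)) + t' / base n ^ k"
    and t': "t' = (\<Sum>j. of_nat (d' j) / base n ^ (Suc j))" and d': "\<forall>j. d' j \<in> {0..n^2}"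
    unfolding tile_def Tn_def using assms(6) by blast
  define DD where "DD = (\<lambda>j. int (if j < k then ds ! j else d (j - k)))"
  define DD' where "DD' = (\<lambda>j. int (if j < k then ds' ! j else d' (j - k)))"
  have e1: "x = ser n DD"
    using concat[OF n _ dsb, of d, unfolded assms(5)] d xt t unfolding DD_def by simp
  have e2: "x = ser n DD'"
    using concat[OF n _ dsb', of d', unfolded assms(6)] d' xt' t' unfolding DD'_def by simp
  have B1: "\<forall>j. DD j \<ge> 0 \<and> DD j \<le> int n ^ 2"
    using d dsb assms(5) unfolding DD_def by (auto simp flip: of_nat_power)
  have B2: "\<forall>j. DD' j \<ge> 0 \<and> DD' j \<le> int n ^ 2"
    using d' dsb' assms(6) unfolding DD'_def by (auto simp flip: of_nat_power)
  define G where "G = (\<lambda>j. DD j - DD' j)"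
  have GB: "\<forall>j. \<bar>G j\<bar> \<le> int n ^ 2" 
  proof
    fix j
    show "\<bar>G j\<bar> \<le> int n ^ 2"
      using B1[rule_format, of j] B2[rule_format, of j] unfolding G_def abs_le_iff by linarith
  qed
  have s1: "summable (\<lambda>j. of_int (DD j) / base n ^ Suc j)"
    using ser_summable[OF n] B1 by simp
  have s2: "summable (\<lambda>j. of_int (DD' j) / base n ^ Suc j)"
    using ser_summable[OF n] B2 by simp
  have "ser n G = ser n DD - ser n DD'"
    unfolding ser_def G_def using suminf_diff[OF s1 s2] by (simp add: diff_divide_distrib)
  then have z: "ser n G = 0" using e1 e2 by simp
  define j0 where "j0 = (LEAST j. j < k \<and> ds ! j \<noteq> ds' ! j)"
  have j0: "j0 < k \<and> ds ! j0 \<noteq> ds' ! j0"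
    unfolding j0_def using assms(9) by (rule LeastI_ex)
  have lt: "\<forall>j<j0. G j = 0"
  proof (intro allI impI)
    fix j assume "j < j0"
    then have "\<not> (j < k \<and> ds ! j \<noteq> ds' ! j)" unfolding j0_def by (rule not_less_Least)
    with \<open>j < j0\<close> j0 show "G j = 0" unfolding G_def DD_def DD'_def by auto
  qed
  have m1: "ds ! j0 \<in> D" using j0 assms(5,7) nth_mem by blast
  have m2: "ds' ! j0 \<in> D" using j0 assms(6,8) nth_mem by blast
  have "\<bar>int (ds ! j0) - int (ds' ! j0)\<bar> \<noteq> 1" using assms(3) m1 m2 by blast
  moreover have "int (ds ! j0) \<noteq> int (ds' ! j0)" using j0 by simp
  ultimately have g0: "\<bar>G (0 + j0)\<bar> \<ge> 2" unfolding G_def DD_def DD'_def using j0 by auto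
  have GB': "\<forall>j. \<bar>G (j + j0)\<bar> \<le> int n ^ 2" using GB by simp
  show False using key[OF n GB' ser_shiftn[OF n GB z lt]] g0 by simp
qed

end
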